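(* Let $d\ge 2$. For $\omega>0$ consider the eigenvalue problem on the unit hypercube $[0,1]^d$ with impedance boundary condition: \[ -\Delta v - \omega^2 v = \lambda v\ \text{ in }[0,1]^d,\qquad \partial_n v - \mathrm{i}\omega v = 0\ \text{ on } \partial[0,1]^d, \] where $\lambda\in\mathbb{C}$ is an eigenvalue if there is a nonzero function $v$ solving this problem. Then for every fixed $\rho\in (0,1)$ there exist a constant $s>0$ and $\omega_0>0$ such that for all $\omega\ge\omega_0$, every eigenvalue $\lambda$ of this problem with $|\lambda|\leq\rho\,\omega^2$ satisfies $|\operatorname{Im}(\lambda)|\geq s\,\omega$.
   Context: $\partial_n$ denotes the derivative in the direction of the outward unit normal to the boundary of the hypercube. *)

theory Defs
  imports "HOL-Analysis.Analysis"
begin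

definition unit_cube :: "(real ^ 'n) set" where
  "unit_cube = {x. \<forall>i. 0 \<le> x $ i \<and> x $ i \<le> 1}"

text \<open>Classical eigenpair of the impedance problem
  -Laplace v - w^2 v = lam v in the cube, d_n v - i w v = 0 on the boundary.
  v is C^1 up to the boundary (partial derivatives g i, taken within the
  closed cube, exist and are continuous on the closed cube), C^2 in the open
  cube (second partials h i j exist and are continuous there), the PDE holds
  pointwise in the open cube, the impedance condition holds on every face
  (outward normal derivative on face x_i = 0 is -g i, on face x_i = 1 is g i),
  and v is not identically zero on the cube.\<close>
definition impedance_eigenpair :: "real \<Rightarrow> complex \<Rightarrow> (real ^ 'n \<Rightarrow> complex) \<Rightarrow> bool" where
  "impedance_eigenpair \<omega> lam v \<longleftrightarrow>
     (\<exists>x\<in>unit_cube. v x \<noteq> 0) \<and>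
     continuous_on unit_cube v \<and>
     (\<exists>g :: 'n \<Rightarrow> real ^ 'n \<Rightarrow> complex. \<exists>h :: 'n \<Rightarrow> 'n \<Rightarrow> real ^ 'n \<Rightarrow> complex.
        (\<forall>i. continuous_on unit_cube (g i)) \<and>
        (\<forall>i. \<forall>x\<in>unit_cube.
            ((\<lambda>t. v (x + t *\<^sub>R axis i 1)) has_vector_derivative g i x)
              (at 0 within {t. x + t *\<^sub>R axis i 1 \<in> unit_cube})) \<and>
        (\<forall>i j. continuous_on (interior unit_cube) (h i j)) \<and>
        (\<forall>i j. \<forall>x\<in>interior unit_cube.
            ((\<lambda>t. g i (x + t *\<^sub>R axis j 1)) has_vector_derivative h i j x) (at 0)) \<and>
        (\<forall>x\<in>interior unit_cube.
            - (\<Sum>i\<in>UNIV. h i i x) - complex_of_real (\<omega>\<^sup>2) * v x = lam * v x) \<and>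
        (\<forall>x\<in>unit_cube. \<forall>i.
            (x $ i = 0 \<longrightarrow> - g i x - \<i> * complex_of_real \<omega> * v x = 0) \<and>
            (x $ i = 1 \<longrightarrow> g i x - \<i> * complex_of_real \<omega> * v x = 0)))"

end

theory Submission
  imports Defs
begin


definition upd :: "real^'n \<Rightarrow> 'n \<Rightarrow> real \<Rightarrow> real^'n" where
  "upd x i t = x + (t - x$i) *\<^sub>R axis i 1"

lemma upd_nth [simp]: "upd x i t $ j = (if j = i then t else x $ j)"
  by (simp add: upd_def axis_def)

lemma upd_upd [simp]: "upd (upd x i t) i (x$i) = x"
  by (simp add: vec_eq_iff)

lemma upd_same [simp]: "upd x i (x$i) = x"
  by (simp add: vec_eq_iff)

lemma continuous_upd [continuous_intros]:
  "continuous F f \<Longrightarrow> continuous F g \<Longrightarrow> continuous F (\<lambda>z. upd (f z) i (g z))"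
  unfolding upd_def by (intro continuous_intros)

lemma continuous_on_upd [continuous_intros]:
  "continuous_on S f \<Longrightarrow> continuous_on S g \<Longrightarrow> continuous_on S (\<lambda>z. upd (f z) i (g z))"
  unfolding upd_def by (intro continuous_intros)

lemma content_cbox_cart_max:
  fixes u v :: "real^'n"
  shows "Henstock_Kurzweil_Integration.content (cbox u v) = (\<Prod>j\<in>UNIV. max 0 (v$j - u$j))"
proof (cases "\<forall>j. u$j \<le> v$j")
  case True
  then have "cbox u v \<noteq> {}" using interval_ne_empty_cart(1) by blast
  then show ?thesis using True by (simp add: content_cbox_cart)
next
  case False
  then obtain j where "v$j < u$j" by (auto simp: not_le)
  then have "cbox u v = {}" using interval_ne_empty_cart(1) by (meson not_le)
  moreover have "max 0 (v$j - u$j) = 0" using \<open>v$j < u$j\<close> by simp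
  ultimately show ?thesis by (auto simp: content_cbox_if_cart intro!: prod_zero)
qed

lemma content_real_max: "Henstock_Kurzweil_Integration.content (cbox a b :: real set) = max 0 (b - a)"
  by (simp add: content_real_if)

definition sw :: "'n \<Rightarrow> (real^'n) \<times> real \<Rightarrow> (real^'n) \<times> real" where
  "sw i p = (upd (fst p) i (snd p), fst p $ i)"

lemma sw_sw [simp]: "sw i (sw i p) = p"
  by (cases p) (simp add: sw_def)

lemma continuous_sw: "continuous (at p) (sw i)"
  unfolding sw_def by (intro continuous_intros)

lemma sw_image_iff: "y \<in> sw i ` S \<longleftrightarrow> sw i y \<in> S"
  by (metis image_iff sw_sw)

lemma sw_cbox: "sw i ` cbox (u,a) (v,b) = cbox (upd u i a, u$i) (upd v i b, v$i)"
proof -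
  have "y \<in> sw i ` cbox (u,a) (v,b) \<longleftrightarrow> y \<in> cbox (upd u i a, u$i) (upd v i b, v$i)" for y
  proof (cases y)
    case (Pair x t)
    show ?thesis
      unfolding sw_image_iff Pair cbox_Pair_eq
      by (auto simp: sw_def less_eq_vec_def cbox_interval split: if_splits)
  qed
  then show ?thesis by blast
qed

lemma sw_cbox_ex: "\<exists>w z. sw i ` cbox p q = cbox w z"
proof -
  obtain u a where p: "p = (u,a)" by (cases p)
  obtain v b where q: "q = (v,b)" by (cases q)
  show ?thesis unfolding p q sw_cbox by blast
qed

lemma prod_upd_max:
  fixes u v :: "real^'n"
  shows "(\<Prod>j\<in>UNIV. max 0 (upd v i b $ j - upd u i a $ j)) = max 0 (b - a) * (\<Prod>j\<in>UNIV-{i}. max 0 (v$j - u$j))"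
  by (simp add: prod.remove[of UNIV i])

lemma content_sw: "Henstock_Kurzweil_Integration.content (sw i ` cbox p q) = 1 * Henstock_Kurzweil_Integration.content (cbox p q)"
proof -
  obtain u a where p: "p = (u,a)" by (cases p)
  obtain v b where q: "q = (v,b)" by (cases q)
  show ?thesis
    unfolding p q sw_cbox content_Pair content_cbox_cart_max content_real_max prod_upd_max
    by (simp add: prod.remove[of UNIV i "\<lambda>j. max 0 (v$j - u$j)"])
qed

lemma vd_shift:
  fixes f :: "real \<Rightarrow> 'a::real_normed_vector"
  assumes "((\<lambda>s. f (t + s)) has_vector_derivative d) (at 0)"
  shows "(f has_vector_derivative d) (at t)"
proof -
  have 1: "((\<lambda>\<tau>. \<tau> - t) has_vector_derivative 1) (at t)"
    by (auto intro!: derivative_eq_intros simp: has_real_derivative_iff_has_vector_derivative[symmetric])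
  have "((\<lambda>s. f (t + s)) has_vector_derivative d) (at ((\<lambda>\<tau>. \<tau> - t) t))"
    using assms by simp
  from vector_diff_chain_at[OF 1 this] show ?thesis by (simp add: o_def)
qed

lemma ftc_dir:
  fixes F D :: "real^'n \<Rightarrow> complex" and lo hi :: "real^'n"
  assumes lohi: "\<forall>j. lo$j < hi$j"
    and cF: "continuous_on (cbox lo hi) F" and cD: "continuous_on (cbox lo hi) D"
    and dF: "\<forall>x\<in>cbox lo hi. ((\<lambda>t. F (x + t *\<^sub>R axis i 1)) has_vector_derivative D x) (at 0)"
  shows "integral (cbox lo hi) D =
     (1 / (hi$i - lo$i)) *\<^sub>R integral (cbox lo hi) (\<lambda>x. F (upd x i (hi$i)) - F (upd x i (lo$i)))"
proof -
  let ?Q = "cbox lo hi"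
  let ?P = "cbox (lo, lo$i) (hi, hi$i)"
  let ?L = "hi$i - lo$i"
  have L: "?L > 0" using lohi by auto
  have updQ: "upd x i t \<in> ?Q" if "x \<in> ?Q" "t \<in> {lo$i..hi$i}" for x t
    using that by (auto simp: mem_box_cart)
  have cP1: "continuous_on ?P (\<lambda>p. D (fst p))"
    unfolding cbox_Pair_eq
    by (rule continuous_on_compose2[OF cD]) (auto intro!: continuous_intros)
  have cP2: "continuous_on ?P (\<lambda>p. D (upd (fst p) i (snd p)))"
    unfolding cbox_Pair_eq
    by (rule continuous_on_compose2[OF cD]) (auto intro!: continuous_intros updQ simp del: cbox_interval)
  have I1: "integral ?P (\<lambda>p. D (fst p)) = ?L *\<^sub>R integral ?Q D"
  proof -
    have "integral ?P (\<lambda>p. D (fst p)) = integral ?Q (\<lambda>x. integral (cbox (lo$i) (hi$i)) (\<lambda>y. D x))"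
      using integral_prod_continuous[OF cP1] by simp
    also have "\<dots> = integral ?Q (\<lambda>x. ?L *\<^sub>R D x)"
      using L by (simp add: content_real_max)
    also have "\<dots> = ?L *\<^sub>R integral ?Q D" by simp
    finally show ?thesis .
  qed
  have tw: "((\<lambda>p. D (fst (sw i p))) has_integral (1/1) *\<^sub>R integral ?P (\<lambda>p. D (fst p))) (sw i ` ?P)"
  proof (rule has_integral_twiddle[where g="sw i" and h="sw i"])
    show "0 < (1::real)" by simp
    show "sw i (sw i x) = x" for x by simp
    show "sw i (sw i x) = x" for x by simp
    show "continuous (at x) (sw i)" for x by (rule continuous_sw)
    show "\<exists>w z. sw i ` cbox u v = cbox w z" for u v by (rule sw_cbox_ex)
    show "\<exists>w z. sw i ` cbox u v = cbox w z" for u v by (rule sw_cbox_ex)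
    show "Henstock_Kurzweil_Integration.content (sw i ` cbox u v) = 1 * Henstock_Kurzweil_Integration.content (cbox u v)" for u v by (rule content_sw)
    show "((\<lambda>p. D (fst p)) has_integral integral ?P (\<lambda>p. D (fst p))) ?P"
      using cP1 integrable_continuous integrable_integral by blast
  qed
  have swP: "sw i ` ?P = ?P" by (simp add: sw_cbox)
  have I2: "integral ?P (\<lambda>p. D (upd (fst p) i (snd p))) = integral ?P (\<lambda>p. D (fst p))"
    using tw unfolding swP by (simp add: sw_def integral_unique)
  have I3: "integral ?P (\<lambda>p. D (upd (fst p) i (snd p))) =
      integral ?Q (\<lambda>x. integral (cbox (lo$i) (hi$i)) (\<lambda>t. D (upd x i t)))"
    using integral_prod_continuous[OF cP2] by simp
  have inner: "integral (cbox (lo$i) (hi$i)) (\<lambda>t. D (upd x i t)) = F (upd x i (hi$i)) - F (upd x i (lo$i))"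
    if x: "x \<in> ?Q" for x
  proof -
    have "((\<lambda>t. D (upd x i t)) has_integral (F (upd x i (hi$i)) - F (upd x i (lo$i)))) {lo$i..hi$i}"
    proof (rule fundamental_theorem_of_calculus)
      show "lo$i \<le> hi$i" using L by simp
      fix t assume t: "t \<in> {lo$i..hi$i}"
      have y: "upd x i t \<in> ?Q" using updQ[OF x t] .
      have eq: "upd x i t + s *\<^sub>R axis i 1 = upd x i (t + s)" for s
        by (simp add: vec_eq_iff axis_def)
      have "((\<lambda>s. F (upd x i (t + s))) has_vector_derivative D (upd x i t)) (at 0)"
      proof -
        have "((\<lambda>s. F (upd x i t + s *\<^sub>R axis i 1)) has_vector_derivative D (upd x i t)) (at 0)"
          using dF y by blast
        then show ?thesis unfolding eq .
      qed
      then have "((\<lambda>t. F (upd x i t)) has_vector_derivative D (upd x i t)) (at t)"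
        by (rule vd_shift)
      then show "((\<lambda>t. F (upd x i t)) has_vector_derivative D (upd x i t)) (at t within {lo$i..hi$i})"
        by (rule has_vector_derivative_at_within)
    qed
    then show ?thesis by (simp add: cbox_interval integral_unique)
  qed
  have "?L *\<^sub>R integral ?Q D = integral ?Q (\<lambda>x. F (upd x i (hi$i)) - F (upd x i (lo$i)))"
  proof -
    have "integral ?Q (\<lambda>x. integral (cbox (lo$i) (hi$i)) (\<lambda>t. D (upd x i t))) =
          integral ?Q (\<lambda>x. F (upd x i (hi$i)) - F (upd x i (lo$i)))"
      by (rule integral_cong) (rule inner)
    then show ?thesis using I1 I2 I3 by simp
  qed
  then have "(1/?L) *\<^sub>R (?L *\<^sub>R integral ?Q D) = (1/?L) *\<^sub>R integral ?Q (\<lambda>x. F (upd x i (hi$i)) - F (upd x i (lo$i)))"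
    by (simp only:)
  then show ?thesis using L by simp
qed

definition lo :: "real \<Rightarrow> real^'n" where "lo r = (\<chi> j. (1 - r) / 2)"
definition hi :: "real \<Rightarrow> real^'n" where "hi r = (\<chi> j. (1 + r) / 2)"

lemma unit_cube_cbox: "unit_cube = cbox 0 (\<chi> j. 1)"
  by (auto simp: unit_cube_def mem_box_cart)

lemma interior_unit_cube: "interior unit_cube = box 0 (\<chi> j. 1)"
  by (simp add: unit_cube_cbox)

lemma mem_interior_unit_cube: "x \<in> interior unit_cube \<longleftrightarrow> (\<forall>i. 0 < x$i \<and> x$i < 1)"
  by (simp add: interior_unit_cube mem_box_cart)

lemma Q_sub_box: assumes "0 < r" "r < 1" shows "cbox (lo r) (hi r) \<subseteq> box 0 (\<chi> j. 1 :: real^'n)"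
proof
  fix x :: "real^'n" assume "x \<in> cbox (lo r) (hi r)"
  then have *: "\<And>i. (1 - r)/2 \<le> x$i \<and> x$i \<le> (1 + r)/2" by (auto simp: mem_box_cart lo_def hi_def)
  have "0 < x$i \<and> x$i < 1" for i using *[of i] assms by (auto simp: field_simps)
  then show "x \<in> box 0 (\<chi> j. 1)" by (auto simp: mem_box_cart)
qed

lemma conv_Q:
  fixes f :: "real^'n \<Rightarrow> complex" and \<phi> :: "nat \<Rightarrow> real^'n \<Rightarrow> real^'n"
  assumes cf: "continuous_on unit_cube f"
    and r: "\<And>n. 0 < r n \<and> r n < 1" and rlim: "r \<longlonglongrightarrow> 1"
    and c\<phi>: "\<And>n. continuous_on (cbox (lo (r n)) (hi (r n))) (\<phi> n)"
    and \<phi>in: "\<And>n x. x \<in> cbox (lo (r n)) (hi (r n)) \<Longrightarrow> \<phi> n x \<in> unit_cube"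
    and \<psi>lim: "\<And>x. x \<in> box 0 (\<chi> j. 1) \<Longrightarrow> (\<lambda>n. \<phi> n x) \<longlonglongrightarrow> \<psi> x"
    and \<psi>in: "\<And>x. x \<in> box 0 (\<chi> j. 1) \<Longrightarrow> \<psi> x \<in> unit_cube"
  shows "(\<lambda>n. integral (cbox (lo (r n)) (hi (r n))) (\<lambda>x. f (\<phi> n x))) \<longlonglongrightarrow> integral unit_cube (\<lambda>x. f (\<psi> x))"
proof -
  let ?B = "box 0 (\<chi> j. 1) :: (real^'n) set"
  let ?Q = "\<lambda>n. cbox (lo (r n)) (hi (r n)) :: (real^'n) set"
  have "compact unit_cube" by (simp add: unit_cube_cbox)
  then have "bounded (f ` unit_cube)" using cf by (meson compact_continuous_image compact_imp_bounded)
  then obtain B where B: "\<And>y. y \<in> unit_cube \<Longrightarrow> norm (f y) \<le> B"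
    by (auto simp: bounded_iff)
  define G where "G n x = (if x \<in> ?Q n then f (\<phi> n x) else 0)" for n x
  have intQ: "(\<lambda>x. f (\<phi> n x)) integrable_on ?Q n" for n
    by (rule integrable_continuous, rule continuous_on_compose2[OF cf c\<phi>]) (auto intro: \<phi>in)
  have QB: "?Q n \<inter> ?B = ?Q n" for n using Q_sub_box[of "r n"] r[of n] by blast
  have eqG: "integral ?B (G n) = integral (?Q n) (\<lambda>x. f (\<phi> n x))" for n
    unfolding G_def integral_restrict_Int QB ..
  have intG: "G n integrable_on ?B" for n
    unfolding G_def integrable_restrict_Int QB by (rule intQ)
  have Bint: "(\<lambda>x. B) integrable_on ?B"
    by (simp add: integrable_on_open_interval integrable_const)
  have le: "norm (G n x) \<le> B" if "x \<in> ?B" for n x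
  proof -
    have "B \<ge> 0" using B[of 0] by (auto simp: unit_cube_def) (meson norm_ge_zero order_trans)
    then show ?thesis using B \<phi>in by (auto simp: G_def)
  qed
  have pw: "(\<lambda>n. G n x) \<longlonglongrightarrow> f (\<psi> x)" if x: "x \<in> ?B" for x
  proof -
    have "\<forall>j. \<bar>2 * x$j - 1\<bar> < 1"
    proof
      fix j
      have "0 < x$j \<and> x$j < 1" using x by (auto simp: mem_box_cart)
      then show "\<bar>2 * x$j - 1\<bar> < 1" by (simp add: abs_less_iff)
    qed
    then have "\<forall>j. eventually (\<lambda>n. \<bar>2 * x$j - 1\<bar> < r n) sequentially"
      using rlim by (auto intro: order_tendstoD(1))
    then have ev: "eventually (\<lambda>n. \<forall>j. \<bar>2 * x$j - 1\<bar> < r n) sequentially"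
      by (intro eventually_all_finite) blast
    have evQ: "eventually (\<lambda>n. x \<in> ?Q n) sequentially"
      using ev by eventually_elim (auto simp: mem_box_cart lo_def hi_def abs_less_iff, (smt (verit))+)
    have "(\<lambda>n. f (\<phi> n x)) \<longlonglongrightarrow> f (\<psi> x)"
    proof (rule continuous_on_tendsto_compose[OF cf \<psi>lim[OF x] \<psi>in[OF x]])
      show "eventually (\<lambda>n. \<phi> n x \<in> unit_cube) sequentially"
        using evQ by eventually_elim (rule \<phi>in)
    qed
    then show ?thesis
      by (rule Lim_transform_eventually) (use evQ in \<open>eventually_elim, simp add: G_def\<close>)
  qed
  have "(\<lambda>n. integral ?B (G n)) \<longlonglongrightarrow> integral ?B (\<lambda>x. f (\<psi> x))"
    by (rule dominated_convergence(2)[OF intG Bint le pw])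
  then show ?thesis unfolding eqG by (simp add: integral_open_interval unit_cube_cbox)
qed

lemma tendsto_upd [tendsto_intros]:
  "(f \<longlongrightarrow> a) F \<Longrightarrow> (g \<longlongrightarrow> b) F \<Longrightarrow> ((\<lambda>z. upd (f z) i (g z)) \<longlongrightarrow> upd a i b) F"
  unfolding upd_def by (intro tendsto_intros)

lemma upd_in_cube: "x \<in> unit_cube \<Longrightarrow> 0 \<le> c \<Longrightarrow> c \<le> 1 \<Longrightarrow> upd x i c \<in> unit_cube"
  by (auto simp: unit_cube_def)

lemma div_limit:
  fixes F Di :: "'n \<Rightarrow> real^'n \<Rightarrow> complex" and D :: "real^'n \<Rightarrow> complex"
  assumes cF: "\<And>i. continuous_on unit_cube (F i)"
    and cDi: "\<And>i. continuous_on (interior unit_cube) (Di i)"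
    and cD: "continuous_on unit_cube D"
    and dF: "\<And>i x. x \<in> interior unit_cube \<Longrightarrow> ((\<lambda>t. F i (x + t *\<^sub>R axis i 1)) has_vector_derivative Di i x) (at 0)"
    and sumD: "\<And>x. x \<in> interior unit_cube \<Longrightarrow> (\<Sum>i\<in>UNIV. Di i x) = D x"
  shows "integral unit_cube D = (\<Sum>i\<in>UNIV. integral unit_cube (\<lambda>x. F i (upd x i 1) - F i (upd x i 0)))"
proof -
  define r where "r n = 1 - inverse (real (Suc n)) / 2" for n
  have r: "0 < r n \<and> r n < 1" for n
  proof -
    have "0 < inverse (real (Suc n))" "inverse (real (Suc n)) \<le> 1" by (auto simp: field_simps)
    then show ?thesis by (auto simp: r_def)
  qed
  have rlim: "r \<longlonglongrightarrow> 1"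
  proof -
    have "(\<lambda>n. 1 - inverse (real (Suc n)) / 2) \<longlonglongrightarrow> 1 - 0 / 2"
      by (intro tendsto_intros LIMSEQ_inverse_real_of_nat) simp
    then show ?thesis by (simp add: r_def[abs_def])
  qed
  let ?Q = "\<lambda>n. cbox (lo (r n)) (hi (r n)) :: (real^'n) set"
  have Qint: "?Q n \<subseteq> interior unit_cube" for n
    using Q_sub_box[of "r n"] r[of n] by (simp add: interior_unit_cube)
  have Qcube: "?Q n \<subseteq> unit_cube" for n
    using Qint[of n] interior_subset by blast
  have Qmem: "x \<in> ?Q n \<longleftrightarrow> (\<forall>j. (1 - r n)/2 \<le> x$j \<and> x$j \<le> (1 + r n)/2)" for x n
    by (simp add: mem_box_cart lo_def hi_def)
  define T where "T i n = integral (?Q n) (\<lambda>x. F i (upd x i ((1 + r n)/2)))" for i n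
  define Bt where "Bt i n = integral (?Q n) (\<lambda>x. F i (upd x i ((1 - r n)/2)))" for i n
  have eqn: "integral (?Q n) D = (\<Sum>i\<in>UNIV. (1 / r n) *\<^sub>R (T i n - Bt i n))" for n
  proof -
    have "integral (?Q n) D = integral (?Q n) (\<lambda>x. \<Sum>i\<in>UNIV. Di i x)"
      by (rule integral_cong) (use sumD Qint in force)
    also have "\<dots> = (\<Sum>i\<in>UNIV. integral (?Q n) (Di i))"
      by (rule integral_sum) (auto intro!: integrable_continuous continuous_on_subset[OF cDi Qint])
    also have "\<dots> = (\<Sum>i\<in>UNIV. (1 / r n) *\<^sub>R (T i n - Bt i n))"
    proof (rule sum.cong[OF refl])
      fix i
      have "integral (?Q n) (Di i) = (1 / (hi (r n) $ i - lo (r n) $ i)) *\<^sub>R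
          integral (?Q n) (\<lambda>x. F i (upd x i (hi (r n) $ i)) - F i (upd x i (lo (r n) $ i)))"
      proof (rule ftc_dir)
        show "\<forall>j. lo (r n) $ j < hi (r n) $ j" using r[of n] by (simp add: lo_def hi_def)
        show "continuous_on (?Q n) (F i)" by (rule continuous_on_subset[OF cF Qcube])
        show "continuous_on (?Q n) (Di i)" by (rule continuous_on_subset[OF cDi Qint])
        show "\<forall>x\<in>?Q n. ((\<lambda>t. F i (x + t *\<^sub>R axis i 1)) has_vector_derivative Di i x) (at 0)"
          using dF Qint by blast
      qed
      also have "\<dots> = (1 / r n) *\<^sub>R (T i n - Bt i n)"
      proof -
        have c1: "continuous_on (?Q n) (\<lambda>x. F i (upd x i ((1 + r n)/2)))"
          by (rule continuous_on_compose2[OF cF]) (use Qcube r[of n] in \<open>auto intro!: continuous_intros upd_in_cube\<close>)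
        have c2: "continuous_on (?Q n) (\<lambda>x. F i (upd x i ((1 - r n)/2)))"
          by (rule continuous_on_compose2[OF cF]) (use Qcube r[of n] in \<open>auto intro!: continuous_intros upd_in_cube\<close>)
        have e: "hi (r n) $ i - lo (r n) $ i = r n" by (simp add: lo_def hi_def field_simps)
        have ln: "lo (r n) $ i = (1 - r n)/2" "hi (r n) $ i = (1 + r n)/2" by (simp_all add: lo_def hi_def)
        show ?thesis
          unfolding T_def Bt_def e ln using r[of n] by (simp add: integral_diff integrable_continuous c1 c2 field_simps)
      qed
      finally show "integral (?Q n) (Di i) = (1 / r n) *\<^sub>R (T i n - Bt i n)" .
    qed
    finally show ?thesis .
  qed
  have L1: "(\<lambda>n. integral (?Q n) D) \<longlonglongrightarrow> integral unit_cube D"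
  proof -
    have "(\<lambda>n. integral (?Q n) (\<lambda>x. D x)) \<longlonglongrightarrow> integral unit_cube (\<lambda>x. D x)"
    proof (rule conv_Q[OF cD r rlim])
      show "x \<in> unit_cube" if "x \<in> ?Q n" for x n using that Qcube by blast
      show "x \<in> unit_cube" if "x \<in> box 0 (\<chi> j. 1)" for x
        using that box_subset_cbox unfolding unit_cube_cbox by blast
    qed (auto intro: continuous_on_id)
    then show ?thesis by simp
  qed
  have LT: "(\<lambda>n. T i n) \<longlonglongrightarrow> integral unit_cube (\<lambda>x. F i (upd x i 1))" for i
    unfolding T_def
  proof (rule conv_Q[OF cF r rlim])
    show "continuous_on (?Q n) (\<lambda>x. upd x i ((1 + r n) / 2))" for n by (intro continuous_intros)
    show "upd x i ((1 + r n) / 2) \<in> unit_cube" if "x \<in> ?Q n" for x n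
      using that r[of n] Qcube by (auto intro!: upd_in_cube)
    show "(\<lambda>n. upd x i ((1 + r n) / 2)) \<longlonglongrightarrow> upd x i 1" for x
    proof -
      have "(\<lambda>n. (1 + r n)/2) \<longlonglongrightarrow> (1+1)/2" by (intro tendsto_intros rlim) simp
      from tendsto_upd[OF tendsto_const this, of x i] show ?thesis by simp
    qed
    show "upd x i 1 \<in> unit_cube" if "x \<in> box 0 (\<chi> j. 1)" for x
      using that by (auto simp: mem_box_cart unit_cube_def less_imp_le)
  qed
  have LB: "(\<lambda>n. Bt i n) \<longlonglongrightarrow> integral unit_cube (\<lambda>x. F i (upd x i 0))" for i
    unfolding Bt_def
  proof (rule conv_Q[OF cF r rlim])
    show "continuous_on (?Q n) (\<lambda>x. upd x i ((1 - r n) / 2))" for n by (intro continuous_intros)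
    show "upd x i ((1 - r n) / 2) \<in> unit_cube" if "x \<in> ?Q n" for x n
      using that r[of n] Qcube by (auto intro!: upd_in_cube)
    show "(\<lambda>n. upd x i ((1 - r n) / 2)) \<longlonglongrightarrow> upd x i 0" for x
    proof -
      have "(\<lambda>n. (1 - r n)/2) \<longlonglongrightarrow> (1-1)/2" by (intro tendsto_intros rlim) simp
      from tendsto_upd[OF tendsto_const this, of x i] show ?thesis by simp
    qed
    show "upd x i 0 \<in> unit_cube" if "x \<in> box 0 (\<chi> j. 1)" for x
      using that by (auto simp: mem_box_cart unit_cube_def less_imp_le)
  qed
  have L2: "(\<lambda>n. \<Sum>i\<in>UNIV. (1 / r n) *\<^sub>R (T i n - Bt i n)) \<longlonglongrightarrow>
      (\<Sum>i\<in>UNIV. (1 / 1) *\<^sub>R (integral unit_cube (\<lambda>x. F i (upd x i 1)) - integral unit_cube (\<lambda>x. F i (upd x i 0))))"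
    by (intro tendsto_intros rlim LT LB) simp
  have "integral unit_cube D = (\<Sum>i\<in>UNIV. (1 / 1) *\<^sub>R (integral unit_cube (\<lambda>x. F i (upd x i 1)) - integral unit_cube (\<lambda>x. F i (upd x i 0))))"
    using LIMSEQ_unique[OF L1 L2[folded eqn]] .
  also have "\<dots> = (\<Sum>i\<in>UNIV. integral unit_cube (\<lambda>x. F i (upd x i 1) - F i (upd x i 0)))"
  proof (rule sum.cong[OF refl])
    fix i
    have c1: "continuous_on unit_cube (\<lambda>x. F i (upd x i 1))"
      by (rule continuous_on_compose2[OF cF]) (auto intro!: continuous_intros simp: unit_cube_def)
    have c2: "continuous_on unit_cube (\<lambda>x. F i (upd x i 0))"
      by (rule continuous_on_compose2[OF cF]) (auto intro!: continuous_intros simp: unit_cube_def)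
    show "(1 / 1) *\<^sub>R (integral unit_cube (\<lambda>x. F i (upd x i 1)) - integral unit_cube (\<lambda>x. F i (upd x i 0))) =
      integral unit_cube (\<lambda>x. F i (upd x i 1) - F i (upd x i 0))"
    proof -
      have i1: "(\<lambda>x. F i (upd x i 1)) integrable_on unit_cube" using c1 unfolding unit_cube_cbox by (rule integrable_continuous)
      have i2: "(\<lambda>x. F i (upd x i 0)) integrable_on unit_cube" using c2 unfolding unit_cube_cbox by (rule integrable_continuous)
      show ?thesis by (simp add: integral_diff[OF i1 i2])
    qed
  qed
  finally show ?thesis .
qed



lemma dir_deriv_line:
  fixes f f' :: "real^'n \<Rightarrow> complex"
  assumes d: "\<And>y. y \<in> U \<Longrightarrow> ((\<lambda>t. f (y + t *\<^sub>R w)) has_vector_derivative f' y) (at 0)"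
    and p: "p + \<sigma> *\<^sub>R w \<in> U"
  shows "((\<lambda>\<sigma>. f (p + \<sigma> *\<^sub>R w)) has_vector_derivative f' (p + \<sigma> *\<^sub>R w)) (at \<sigma>)"
proof (rule vd_shift)
  have "((\<lambda>t. f ((p + \<sigma> *\<^sub>R w) + t *\<^sub>R w)) has_vector_derivative f' (p + \<sigma> *\<^sub>R w)) (at 0)"
    using d[OF p] .
  moreover have "(\<lambda>t. f ((p + \<sigma> *\<^sub>R w) + t *\<^sub>R w)) = (\<lambda>s. f (p + (\<sigma> + s) *\<^sub>R w))"
    by (simp add: scaleR_add_left add.assoc)
  ultimately show "((\<lambda>s. f (p + (\<sigma> + s) *\<^sub>R w)) has_vector_derivative f' (p + \<sigma> *\<^sub>R w)) (at 0)"
    by simp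
qed

lemma mixed_est:
  fixes v :: "real^'n \<Rightarrow> complex" and g :: "'n \<Rightarrow> real^'n \<Rightarrow> complex"
    and h :: "'n \<Rightarrow> 'n \<Rightarrow> real^'n \<Rightarrow> complex"
  assumes dv: "\<And>i y. y \<in> U \<Longrightarrow> ((\<lambda>t. v (y + t *\<^sub>R axis i 1)) has_vector_derivative g i y) (at 0)"
    and dg: "\<And>i j y. y \<in> U \<Longrightarrow> ((\<lambda>t. g i (y + t *\<^sub>R axis j 1)) has_vector_derivative h i j y) (at 0)"
    and s: "0 < s"
    and hyp: "\<And>\<sigma> \<tau>. \<sigma> \<in> {0..s} \<Longrightarrow> \<tau> \<in> {0..s} \<Longrightarrow>
         x + \<sigma> *\<^sub>R axis i 1 + \<tau> *\<^sub>R axis j 1 \<in> U \<and>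
         norm (h i j (x + \<sigma> *\<^sub>R axis i 1 + \<tau> *\<^sub>R axis j 1) - h i j x) \<le> \<epsilon>"
  shows "norm (v (x + s *\<^sub>R axis i 1 + s *\<^sub>R axis j 1) - v (x + s *\<^sub>R axis i 1)
            - v (x + s *\<^sub>R axis j 1) + v x - (s * s) *\<^sub>R h i j x) \<le> 9 * \<epsilon> * (s * s)"
proof -
  define ei where "ei = (axis i 1 :: real^'n)"
  define ej where "ej = (axis j 1 :: real^'n)"
  define P where "P \<sigma> \<tau> = x + \<sigma> *\<^sub>R ei + \<tau> *\<^sub>R ej" for \<sigma> \<tau>
  have hypP: "P \<sigma> \<tau> \<in> U" "norm (h i j (P \<sigma> \<tau>) - h i j x) \<le> \<epsilon>" if "\<sigma> \<in> {0..s}" "\<tau> \<in> {0..s}" for \<sigma> \<tau>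
    using hyp[OF that] by (simp_all add: P_def ei_def ej_def)
  have step1: "norm (g i (P \<sigma> s) - g i (P \<sigma> 0) - s *\<^sub>R h i j x) \<le> 3 * \<epsilon> * s" if \<sigma>: "\<sigma> \<in> {0..s}" for \<sigma>
  proof -
    define f1 where "f1 \<tau> = g i ((x + \<sigma> *\<^sub>R ei) + \<tau> *\<^sub>R ej)" for \<tau>
    define f1' where "f1' \<tau> = h i j ((x + \<sigma> *\<^sub>R ei) + \<tau> *\<^sub>R ej)" for \<tau>
    have f1P: "f1 \<tau> = g i (P \<sigma> \<tau>)" "f1' \<tau> = h i j (P \<sigma> \<tau>)" for \<tau>
      by (simp_all add: f1_def f1'_def P_def)
    have der: "(f1 has_vector_derivative f1' \<tau>) (at \<tau> within {0..s})" if "\<tau> \<in> {0..s}" for \<tau>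
    proof -
      have d: "((\<lambda>t. g i (y + t *\<^sub>R ej)) has_vector_derivative h i j y) (at 0)" if "y \<in> U" for y
        unfolding ej_def by (rule dg[OF that])
      have p: "(x + \<sigma> *\<^sub>R ei) + \<tau> *\<^sub>R ej \<in> U" using hypP(1)[OF \<sigma> that] by (simp add: P_def)
      show ?thesis unfolding f1_def f1'_def
        by (rule has_vector_derivative_at_within, rule dir_deriv_line[where U=U, OF d p])
    qed
    have B: "norm (f1' \<tau> - f1' 0) \<le> 2 * \<epsilon>" if "\<tau> \<in> {0..s}" for \<tau>
    proof -
      have "norm (f1' \<tau> - f1' 0) \<le> norm (f1' \<tau> - h i j x) + norm (f1' 0 - h i j x)"
        by (rule norm_diff_triangle_le[OF order_refl], simp add: norm_minus_commute)
      also have "\<dots> \<le> \<epsilon> + \<epsilon>" unfolding f1P using hypP(2)[OF \<sigma> that] hypP(2)[OF \<sigma>, of 0] s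
        by (intro add_mono) auto
      finally show ?thesis by simp
    qed
    have lin: "norm (f1 s - f1 0 - (s - 0) *\<^sub>R f1' 0) \<le> norm (s - 0) * (2 * \<epsilon>)"
      by (rule vector_differentiable_bound_linearization[where S="{0..s}"])
         (use der B s in \<open>auto simp: closed_segment_eq_real_ivl\<close>)
    have "norm (f1 s - f1 0 - s *\<^sub>R h i j x) \<le> norm (f1 s - f1 0 - s *\<^sub>R f1' 0) + norm (s *\<^sub>R (f1' 0 - h i j x))"
      by (rule order_trans[OF _ norm_triangle_ineq]) (simp add: algebra_simps)
    also have "\<dots> \<le> s * (2 * \<epsilon>) + s * \<epsilon>"
    proof (rule add_mono)
      show "norm (f1 s - f1 0 - s *\<^sub>R f1' 0) \<le> s * (2 * \<epsilon>)" using lin s by simp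
      have "norm (f1' 0 - h i j x) \<le> \<epsilon>" unfolding f1P using hypP(2)[OF \<sigma>, of 0] s by simp
      then show "norm (s *\<^sub>R (f1' 0 - h i j x)) \<le> s * \<epsilon>" using s by (simp add: mult_left_mono)
    qed
    finally show ?thesis unfolding f1P by (simp add: algebra_simps)
  qed
  define f2 where "f2 \<sigma> = v ((x + s *\<^sub>R ej) + \<sigma> *\<^sub>R ei) - v (x + \<sigma> *\<^sub>R ei)" for \<sigma>
  define f2' where "f2' \<sigma> = g i ((x + s *\<^sub>R ej) + \<sigma> *\<^sub>R ei) - g i (x + \<sigma> *\<^sub>R ei)" for \<sigma>
  have f2P: "f2 \<sigma> = v (P \<sigma> s) - v (P \<sigma> 0)" "f2' \<sigma> = g i (P \<sigma> s) - g i (P \<sigma> 0)" for \<sigma>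
    by (simp_all add: f2_def f2'_def P_def algebra_simps)
  have der2: "(f2 has_vector_derivative f2' \<sigma>) (at \<sigma> within {0..s})" if \<sigma>: "\<sigma> \<in> {0..s}" for \<sigma>
  proof -
    have a: "(x + s *\<^sub>R ej) + \<sigma> *\<^sub>R ei \<in> U" using hypP(1)[OF \<sigma>, of s] s by (simp add: P_def algebra_simps)
    have b: "x + \<sigma> *\<^sub>R ei \<in> U" using hypP(1)[OF \<sigma>, of 0] s by (simp add: P_def)
    have d: "((\<lambda>t. v (y + t *\<^sub>R ei)) has_vector_derivative g i y) (at 0)" if "y \<in> U" for y
      unfolding ei_def by (rule dv[OF that])
    have b': "x + \<sigma> *\<^sub>R ei \<in> U" using b .
    have 1: "((\<lambda>\<sigma>. v ((x + s *\<^sub>R ej) + \<sigma> *\<^sub>R ei)) has_vector_derivative g i ((x + s *\<^sub>R ej) + \<sigma> *\<^sub>R ei)) (at \<sigma>)"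
      by (rule dir_deriv_line[where U=U, OF d a])
    have 2: "((\<lambda>\<sigma>. v (x + \<sigma> *\<^sub>R ei)) has_vector_derivative g i (x + \<sigma> *\<^sub>R ei)) (at \<sigma>)"
      by (rule dir_deriv_line[where U=U, OF d b'])
    show ?thesis
      unfolding f2_def f2'_def
      by (rule has_vector_derivative_at_within, rule has_vector_derivative_diff[OF 1 2])
  qed
  have B2: "norm (f2' \<sigma> - f2' 0) \<le> 6 * \<epsilon> * s" if "\<sigma> \<in> {0..s}" for \<sigma>
  proof -
    have "norm (f2' \<sigma> - f2' 0) \<le> norm (f2' \<sigma> - s *\<^sub>R h i j x) + norm (f2' 0 - s *\<^sub>R h i j x)"
      by (rule norm_diff_triangle_le[OF order_refl], simp add: norm_minus_commute)
    also have "\<dots> \<le> 3 * \<epsilon> * s + 3 * \<epsilon> * s" unfolding f2P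
      using step1[OF that] step1[of 0] s by (intro add_mono) (auto simp: algebra_simps)
    finally show ?thesis by simp
  qed
  have lin2: "norm (f2 s - f2 0 - (s - 0) *\<^sub>R f2' 0) \<le> norm (s - 0) * (6 * \<epsilon> * s)"
    by (rule vector_differentiable_bound_linearization[where S="{0..s}"])
       (use der2 B2 s in \<open>auto simp: closed_segment_eq_real_ivl\<close>)
  have "norm (f2 s - f2 0 - (s * s) *\<^sub>R h i j x) \<le> norm (f2 s - f2 0 - s *\<^sub>R f2' 0) + norm (s *\<^sub>R (f2' 0 - s *\<^sub>R h i j x))"
    by (rule order_trans[OF _ norm_triangle_ineq]) (simp add: algebra_simps)
  also have "\<dots> \<le> s * (6 * \<epsilon> * s) + s * (3 * \<epsilon> * s)"
  proof (rule add_mono)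
    show "norm (f2 s - f2 0 - s *\<^sub>R f2' 0) \<le> s * (6 * \<epsilon> * s)" using lin2 s by simp
    have "norm (f2' 0 - s *\<^sub>R h i j x) \<le> 3 * \<epsilon> * s" unfolding f2P using step1[of 0] s by simp
    then show "norm (s *\<^sub>R (f2' 0 - s *\<^sub>R h i j x)) \<le> s * (3 * \<epsilon> * s)" using s by (simp add: mult_left_mono)
  qed
  finally have "norm (f2 s - f2 0 - (s * s) *\<^sub>R h i j x) \<le> 9 * \<epsilon> * (s * s)" by (simp add: algebra_simps)
  moreover have "f2 s - f2 0 = v (x + s *\<^sub>R axis i 1 + s *\<^sub>R axis j 1) - v (x + s *\<^sub>R axis i 1)
            - v (x + s *\<^sub>R axis j 1) + v x"
    unfolding f2P by (simp add: P_def ei_def ej_def)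
  ultimately show ?thesis by simp
qed

lemma clairaut:
  fixes v :: "real^'n \<Rightarrow> complex" and g :: "'n \<Rightarrow> real^'n \<Rightarrow> complex"
    and h :: "'n \<Rightarrow> 'n \<Rightarrow> real^'n \<Rightarrow> complex"
  assumes U: "open U" and x: "x \<in> U"
    and dv: "\<And>i y. y \<in> U \<Longrightarrow> ((\<lambda>t. v (y + t *\<^sub>R axis i 1)) has_vector_derivative g i y) (at 0)"
    and dg: "\<And>i j y. y \<in> U \<Longrightarrow> ((\<lambda>t. g i (y + t *\<^sub>R axis j 1)) has_vector_derivative h i j y) (at 0)"
    and ch: "\<And>i j. continuous_on U (h i j)"
  shows "h i j x = h j i x"
proof -
  have key: "norm (h i j x - h j i x) \<le> 18 * \<epsilon>" if \<epsilon>: "\<epsilon> > 0" for \<epsilon>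
  proof -
    obtain e0 where e0: "e0 > 0" "ball x e0 \<subseteq> U" using openE[OF U x] by blast
    have c1: "isCont (h i j) x" and c2: "isCont (h j i) x"
      using ch U x continuous_on_eq_continuous_at by blast+
    obtain d1 where d1: "d1 > 0" "\<And>y. dist y x < d1 \<Longrightarrow> dist (h i j y) (h i j x) < \<epsilon>"
      using c1 \<epsilon> unfolding continuous_at_eps_delta by blast
    obtain d2 where d2: "d2 > 0" "\<And>y. dist y x < d2 \<Longrightarrow> dist (h j i y) (h j i x) < \<epsilon>"
      using c2 \<epsilon> unfolding continuous_at_eps_delta by blast
    define \<delta> where "\<delta> = min e0 (min d1 d2)"
    have \<delta>: "\<delta> > 0" using e0 d1 d2 by (simp add: \<delta>_def)
    define s where "s = \<delta> / 3"
    have s: "s > 0" using \<delta> by (simp add: s_def)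
    have near: "dist (x + \<sigma> *\<^sub>R axis a 1 + \<tau> *\<^sub>R axis b 1) x < \<delta>"
      if "\<sigma> \<in> {0..s}" "\<tau> \<in> {0..s}" for \<sigma> \<tau> and a b :: 'n
    proof -
      have "dist (x + \<sigma> *\<^sub>R axis a 1 + \<tau> *\<^sub>R axis b 1) x = norm (\<sigma> *\<^sub>R axis a (1::real) + \<tau> *\<^sub>R axis b 1)"
        by (simp add: dist_norm)
      also have "\<dots> \<le> norm (\<sigma> *\<^sub>R axis a (1::real)) + norm (\<tau> *\<^sub>R axis b (1::real))"
        by (rule norm_triangle_ineq)
      also have "\<dots> = \<sigma> + \<tau>" using that by simp
      also have "\<dots> < \<delta>" using that \<delta> by (simp add: s_def)
      finally show ?thesis .
    qed
    have hyp1: "x + \<sigma> *\<^sub>R axis a 1 + \<tau> *\<^sub>R axis b 1 \<in> U \<and>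
         norm (h a b (x + \<sigma> *\<^sub>R axis a 1 + \<tau> *\<^sub>R axis b 1) - h a b x) \<le> \<epsilon>"
      if "\<sigma> \<in> {0..s}" "\<tau> \<in> {0..s}" "(a = i \<and> b = j) \<or> (a = j \<and> b = i)" for \<sigma> \<tau> and a b :: 'n
    proof -
      have dd: "dist (x + \<sigma> *\<^sub>R axis a 1 + \<tau> *\<^sub>R axis b 1) x < \<delta>" by (rule near[OF that(1,2)])
      have "x + \<sigma> *\<^sub>R axis a 1 + \<tau> *\<^sub>R axis b 1 \<in> U"
        using dd e0(2) by (auto simp: \<delta>_def dist_commute)
      moreover have "norm (h a b (x + \<sigma> *\<^sub>R axis a 1 + \<tau> *\<^sub>R axis b 1) - h a b x) \<le> \<epsilon>"
        using that(3)
      proof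
        assume "a = i \<and> b = j"
        then show ?thesis using d1(2)[of "x + \<sigma> *\<^sub>R axis a 1 + \<tau> *\<^sub>R axis b 1"] dd
          by (auto simp: \<delta>_def dist_norm)
      next
        assume "a = j \<and> b = i"
        then show ?thesis using d2(2)[of "x + \<sigma> *\<^sub>R axis a 1 + \<tau> *\<^sub>R axis b 1"] dd
          by (auto simp: \<delta>_def dist_norm)
      qed
      ultimately show ?thesis ..
    qed
    have m1: "norm (v (x + s *\<^sub>R axis i 1 + s *\<^sub>R axis j 1) - v (x + s *\<^sub>R axis i 1)
            - v (x + s *\<^sub>R axis j 1) + v x - (s * s) *\<^sub>R h i j x) \<le> 9 * \<epsilon> * (s * s)"
      by (rule mixed_est[OF dv dg s]) (use hyp1 in auto)
    have m2: "norm (v (x + s *\<^sub>R axis j 1 + s *\<^sub>R axis i 1) - v (x + s *\<^sub>R axis j 1)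
            - v (x + s *\<^sub>R axis i 1) + v x - (s * s) *\<^sub>R h j i x) \<le> 9 * \<epsilon> * (s * s)"
      by (rule mixed_est[OF dv dg s]) (use hyp1 in auto)
    define \<Delta> where "\<Delta> = v (x + s *\<^sub>R axis i 1 + s *\<^sub>R axis j 1) - v (x + s *\<^sub>R axis i 1)
            - v (x + s *\<^sub>R axis j 1) + v x"
    have m2': "norm (\<Delta> - (s * s) *\<^sub>R h j i x) \<le> 9 * \<epsilon> * (s * s)"
      using m2 unfolding \<Delta>_def by (simp add: add.commute add.left_commute algebra_simps)
    have m1': "norm (\<Delta> - (s * s) *\<^sub>R h i j x) \<le> 9 * \<epsilon> * (s * s)"
      using m1 unfolding \<Delta>_def .
    have "norm ((s * s) *\<^sub>R (h i j x - h j i x)) \<le> norm (\<Delta> - (s * s) *\<^sub>R h j i x) + norm (\<Delta> - (s * s) *\<^sub>R h i j x)"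
      by (rule order_trans[OF _ norm_triangle_ineq4]) (simp add: algebra_simps)
    also have "\<dots> \<le> (s * s) * (18 * \<epsilon>)" using m1' m2' by (simp add: algebra_simps)
    finally have "(s * s) * norm (h i j x - h j i x) \<le> (s * s) * (18 * \<epsilon>)" using s by simp
    then show ?thesis using s by (simp add: mult_le_cancel_left_pos)
  qed
  show ?thesis
  proof (rule ccontr)
    assume "h i j x \<noteq> h j i x"
    then have "norm (h i j x - h j i x) > 0" by simp
    with key[of "norm (h i j x - h j i x) / 36"] show False by simp
  qed
qed



lemma mult_cnj_norm: "z * cnj z = complex_of_real ((cmod z)\<^sup>2)"
  by (simp add: complex_norm_square[symmetric])

lemma mult_cnj_norm': "z * cnj z = (complex_of_real (cmod z))\<^sup>2"
  by (simp add: complex_norm_square[symmetric])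

lemma integrable_cube: "continuous_on unit_cube f \<Longrightarrow> (f :: real^'n \<Rightarrow> 'b::banach) integrable_on unit_cube"
  unfolding unit_cube_cbox by (rule integrable_continuous)

lemma integral_of_real_cube:
  "continuous_on unit_cube f \<Longrightarrow> integral unit_cube (\<lambda>x. complex_of_real (f x)) = of_real (integral unit_cube f)"
  using integral_linear[OF integrable_cube bounded_linear_of_real, of f] by (simp add: o_def)

lemma integral_Re_cube:
  "continuous_on unit_cube f \<Longrightarrow> Re (integral unit_cube f) = integral unit_cube (\<lambda>x. Re (f x))"
  using integral_linear[OF integrable_cube bounded_linear_Re, of f] by (simp add: o_def)

lemma integral_Im_cube:
  "continuous_on unit_cube f \<Longrightarrow> Im (integral unit_cube f) = integral unit_cube (\<lambda>x. Im (f x))"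
  using integral_linear[OF integrable_cube bounded_linear_Im, of f] by (simp add: o_def)

lemma cont_upd_cube:
  assumes "continuous_on unit_cube f" "0 \<le> c" "c \<le> 1"
  shows "continuous_on unit_cube (\<lambda>x. f (upd x i c))"
  by (rule continuous_on_compose2[OF assms(1)]) (use assms in \<open>auto intro!: continuous_intros upd_in_cube\<close>)

lemma open_interior_cube: "open (interior unit_cube)" by simp

lemma deriv_interior:
  fixes v :: "real^'n \<Rightarrow> complex"
  assumes x: "x \<in> interior unit_cube"
    and d: "((\<lambda>t. v (x + t *\<^sub>R axis i 1)) has_vector_derivative g) (at 0 within {t. x + t *\<^sub>R axis i 1 \<in> unit_cube})"
  shows "((\<lambda>t. v (x + t *\<^sub>R axis i 1)) has_vector_derivative g) (at 0)"
proof -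
  let ?S = "(\<lambda>t. x + t *\<^sub>R axis i (1::real)) -` interior unit_cube"
  have "open ?S"
    by (rule continuous_open_vimage) (auto intro!: continuous_intros)
  moreover have "0 \<in> ?S" using x by simp
  moreover have "?S \<subseteq> {t. x + t *\<^sub>R axis i 1 \<in> unit_cube}" using interior_subset by auto
  ultimately have "at 0 within {t. x + t *\<^sub>R axis i 1 \<in> unit_cube} = at 0"
    by (meson at_within_open_subset)
  then show ?thesis using d by simp
qed

lemma main_est:
  fixes \<omega> :: real and lam :: complex and v :: "real^'n \<Rightarrow> complex"
  assumes eig: "impedance_eigenpair \<omega> lam v" and \<omega>: "\<omega> > 0"
    and apos: "\<omega>\<^sup>2 + Re lam > 0"
  shows "2 * (\<omega>\<^sup>2 + Re lam) * \<omega> \<le> \<bar>Im lam\<bar> * (real CARD('n) * \<omega>\<^sup>2 + (\<omega>\<^sup>2 + Re lam))"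
proof -
  have nz: "\<exists>x\<in>unit_cube. v x \<noteq> 0" and cv: "continuous_on unit_cube v"
    using eig unfolding impedance_eigenpair_def by blast+
  obtain g :: "'n \<Rightarrow> real ^ 'n \<Rightarrow> complex" and h :: "'n \<Rightarrow> 'n \<Rightarrow> real ^ 'n \<Rightarrow> complex" where
    cg': "\<forall>i. continuous_on unit_cube (g i)" and
    G1': "\<forall>i. \<forall>x\<in>unit_cube.
            ((\<lambda>t. v (x + t *\<^sub>R axis i 1)) has_vector_derivative g i x)
              (at 0 within {t. x + t *\<^sub>R axis i 1 \<in> unit_cube})" and
    ch': "\<forall>i j. continuous_on (interior unit_cube) (h i j)" and
    dg': "\<forall>i j. \<forall>x\<in>interior unit_cube.
            ((\<lambda>t. g i (x + t *\<^sub>R axis j 1)) has_vector_derivative h i j x) (at 0)" and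
    pde0': "\<forall>x\<in>interior unit_cube.
            - (\<Sum>i\<in>UNIV. h i i x) - complex_of_real (\<omega>\<^sup>2) * v x = lam * v x" and
    bc': "\<forall>x\<in>unit_cube. \<forall>i.
            (x $ i = 0 \<longrightarrow> - g i x - \<i> * complex_of_real \<omega> * v x = 0) \<and>
            (x $ i = 1 \<longrightarrow> g i x - \<i> * complex_of_real \<omega> * v x = 0)"
    using eig unfolding impedance_eigenpair_def by blast
  have cg: "\<And>i. continuous_on unit_cube (g i)" using cg' by blast
  have G1: "\<And>i x. x\<in>unit_cube \<Longrightarrow>
            ((\<lambda>t. v (x + t *\<^sub>R axis i 1)) has_vector_derivative g i x)
              (at 0 within {t. x + t *\<^sub>R axis i 1 \<in> unit_cube})" using G1' by blast
  have ch: "\<And>i j. continuous_on (interior unit_cube) (h i j)" using ch' by blast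
  have dg: "\<And>i j x. x\<in>interior unit_cube \<Longrightarrow>
            ((\<lambda>t. g i (x + t *\<^sub>R axis j 1)) has_vector_derivative h i j x) (at 0)" using dg' by blast
  have pde0: "\<And>x. x\<in>interior unit_cube \<Longrightarrow>
            - (\<Sum>i\<in>UNIV. h i i x) - complex_of_real (\<omega>\<^sup>2) * v x = lam * v x" using pde0' by blast
  have bc: "\<And>x i. x\<in>unit_cube \<Longrightarrow>
            (x $ i = 0 \<longrightarrow> - g i x - \<i> * complex_of_real \<omega> * v x = 0) \<and>
            (x $ i = 1 \<longrightarrow> g i x - \<i> * complex_of_real \<omega> * v x = 0)" using bc' by blast
  let ?U = "interior unit_cube :: (real^'n) set"
  define k2 where "k2 = complex_of_real (\<omega>\<^sup>2) + lam"
  define a where "a = Re k2"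
  define b where "b = Im k2"
  have a_eq: "a = \<omega>\<^sup>2 + Re lam" and b_eq: "b = Im lam" by (simp_all add: a_def b_def k2_def)
  have dv: "((\<lambda>t. v (y + t *\<^sub>R axis i 1)) has_vector_derivative g i y) (at 0)" if "y \<in> ?U" for i y
    by (rule deriv_interior[OF that G1]) (use that interior_subset in blast)
  have sym: "h i j y = h j i y" if "y \<in> ?U" for i j y
    by (rule clairaut[where U="?U", OF open_interior_cube that dv dg ch])
  have pde: "(\<Sum>i\<in>UNIV. h i i y) = - k2 * v y" if "y \<in> ?U" for y
  proof -
    let ?S = "\<Sum>i\<in>UNIV. h i i y" and ?w = "complex_of_real (\<omega>\<^sup>2) * v y"
    have "?S = - (- ?S - ?w) - ?w" by simp
    also have "\<dots> = - (lam * v y) - ?w" by (simp only: pde0[OF that])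
    also have "\<dots> = - k2 * v y" by (simp add: k2_def algebra_simps)
    finally show ?thesis .
  qed
  have bc1: "g i y = \<i> * complex_of_real \<omega> * v y" if "y \<in> unit_cube" "y $ i = 1" for i y
    using bc[OF that(1), of i] that(2) by simp
  have bc0: "g i y = - (\<i> * complex_of_real \<omega> * v y)" if "y \<in> unit_cube" "y $ i = 0" for i y
    using bc[OF that(1), of i] that(2) by (simp add: minus_equation_iff[of "g i y"])
  have cvU: "continuous_on ?U v" and cgU: "\<And>i. continuous_on ?U (g i)"
    using cv cg continuous_on_subset interior_subset by blast+
  define nv where "nv x = (cmod (v x))\<^sup>2" for x
  define ng where "ng x = (\<Sum>j\<in>UNIV. (cmod (g j x))\<^sup>2)" for x
  define NV where "NV = integral unit_cube nv"
  define NG where "NG = integral unit_cube ng"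
  define BV where "BV = (\<Sum>i\<in>UNIV. integral unit_cube (\<lambda>x. nv (upd x i 1) + nv (upd x i 0)))"
  have cnv: "continuous_on unit_cube nv" unfolding nv_def by (intro continuous_intros cv)
  have cng: "continuous_on unit_cube ng" unfolding ng_def by (intro continuous_intros cg)
  have cnvb: "continuous_on unit_cube (\<lambda>x. nv (upd x i 1) + nv (upd x i 0))" for i
    by (intro continuous_intros cont_upd_cube cnv) auto
  have green: "integral unit_cube (\<lambda>x. - k2 * (v x * cnj (v x)) + (\<Sum>i\<in>UNIV. g i x * cnj (g i x))) =
     (\<Sum>i\<in>UNIV. integral unit_cube (\<lambda>x. g i (upd x i 1) * cnj (v (upd x i 1)) - g i (upd x i 0) * cnj (v (upd x i 0))))"
  proof (rule div_limit[where F="\<lambda>i x. g i x * cnj (v x)" and Di="\<lambda>i x. h i i x * cnj (v x) + g i x * cnj (g i x)"])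
    show "continuous_on unit_cube (\<lambda>x. g i x * cnj (v x))" for i by (intro continuous_intros cg cv)
    show "continuous_on ?U (\<lambda>x. h i i x * cnj (v x) + g i x * cnj (g i x))" for i
      by (intro continuous_intros ch cgU cvU)
    show "continuous_on unit_cube (\<lambda>x. - k2 * (v x * cnj (v x)) + (\<Sum>i\<in>UNIV. g i x * cnj (g i x)))"
      by (intro continuous_intros cg cv)
    show "((\<lambda>t. g i (x + t *\<^sub>R axis i 1) * cnj (v (x + t *\<^sub>R axis i 1))) has_vector_derivative
           h i i x * cnj (v x) + g i x * cnj (g i x)) (at 0)" if x: "x \<in> ?U" for i x
    proof -
      have "((\<lambda>t. g i (x + t *\<^sub>R axis i 1) * cnj (v (x + t *\<^sub>R axis i 1))) has_vector_derivative
           g i (x + 0 *\<^sub>R axis i 1) * cnj (g i x) + h i i x * cnj (v (x + 0 *\<^sub>R axis i 1))) (at 0)"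
        by (rule has_vector_derivative_mult[OF dg[OF x] has_vector_derivative_cnj[OF dv[OF x]]])
      then show ?thesis by (simp add: add.commute)
    qed
    show "(\<Sum>i\<in>UNIV. h i i x * cnj (v x) + g i x * cnj (g i x)) = - k2 * (v x * cnj (v x)) + (\<Sum>i\<in>UNIV. g i x * cnj (g i x))"
      if x: "x \<in> ?U" for x
      by (simp add: sum.distrib sum_distrib_right[symmetric] pde[OF x])
  qed
  have gl: "integral unit_cube (\<lambda>x. - k2 * (v x * cnj (v x)) + (\<Sum>i\<in>UNIV. g i x * cnj (g i x))) =
      - k2 * of_real NV + of_real NG"
  proof -
    have "integral unit_cube (\<lambda>x. - k2 * (v x * cnj (v x)) + (\<Sum>i\<in>UNIV. g i x * cnj (g i x))) =
        integral unit_cube (\<lambda>x. - k2 * complex_of_real (nv x) + complex_of_real (ng x))"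
      by (simp add: mult_cnj_norm nv_def ng_def)
    also have "\<dots> = integral unit_cube (\<lambda>x. complex_of_real (ng x) - k2 * complex_of_real (nv x))"
      by (simp add: algebra_simps)
    also have "\<dots> = - k2 * of_real NV + of_real NG"
    proof -
      have i1: "(\<lambda>x. complex_of_real (ng x)) integrable_on unit_cube"
        by (rule integrable_cube) (intro continuous_intros cng)
      have i2: "(\<lambda>x. k2 * complex_of_real (nv x)) integrable_on unit_cube"
        by (rule integrable_cube) (intro continuous_intros cnv)
      show ?thesis
        by (simp add: integral_diff[OF i1 i2] integral_of_real_cube[OF cng] integral_of_real_cube[OF cnv] NV_def NG_def)
    qed
    finally show ?thesis .
  qed
  have gr: "(\<Sum>i\<in>UNIV. integral unit_cube (\<lambda>x. g i (upd x i 1) * cnj (v (upd x i 1)) - g i (upd x i 0) * cnj (v (upd x i 0))))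
      = \<i> * of_real \<omega> * of_real BV"
  proof -
    have "integral unit_cube (\<lambda>x::real^'n. g i (upd x i 1) * cnj (v (upd x i 1)) - g i (upd x i 0) * cnj (v (upd x i 0)))
       = integral unit_cube (\<lambda>x. \<i> * of_real \<omega> * of_real (nv (upd x i 1) + nv (upd x i 0)))" for i
    proof (rule integral_cong)
      fix x :: "real^'n" assume x: "x \<in> unit_cube"
      have y1: "upd x i 1 \<in> unit_cube" and y0: "upd x i 0 \<in> unit_cube" using x by (auto intro: upd_in_cube)
      show "g i (upd x i 1) * cnj (v (upd x i 1)) - g i (upd x i 0) * cnj (v (upd x i 0)) =
         \<i> * of_real \<omega> * of_real (nv (upd x i 1) + nv (upd x i 0))"
        by (simp add: bc1[OF y1] bc0[OF y0] nv_def mult_cnj_norm' algebra_simps)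
    qed
    then have "(\<Sum>i\<in>UNIV. integral unit_cube (\<lambda>x::real^'n. g i (upd x i 1) * cnj (v (upd x i 1)) - g i (upd x i 0) * cnj (v (upd x i 0))))
       = (\<Sum>i\<in>UNIV. \<i> * of_real \<omega> * of_real (integral unit_cube (\<lambda>x. nv (upd x i 1) + nv (upd x i 0))))"
      by (simp only: integral_mult_right integral_of_real_cube[OF cnvb])
    then show ?thesis by (simp add: BV_def sum_distrib_left)
  qed
  have GE: "- k2 * of_real NV + of_real NG = \<i> * of_real \<omega> * of_real BV"
    using green gl gr by simp
  have GRe: "NG = a * NV" using arg_cong[OF GE, of Re] by (simp add: a_def)
  have GIm: "- b * NV = \<omega> * BV" using arg_cong[OF GE, of Im] by (simp add: b_def)
  \<comment> \<open>Rellich identity\<close>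
  define m where "m j x = x$j - 1/2" for j and x :: "real^'n"
  define M where "M x = (\<Sum>j\<in>UNIV. complex_of_real (m j x) * g j x)" for x
  define Mi where "Mi i x = g i x + (\<Sum>j\<in>UNIV. complex_of_real (m j x) * h j i x)" for i x
  define sg where "sg x = (\<Sum>j\<in>UNIV. g j x * cnj (g j x))" for x
  define DG where "DG i x = (\<Sum>j\<in>UNIV. g j x * cnj (h j i x) + h j i x * cnj (g j x))" for i x
  define sv where "sv x = v x * cnj (v x)" for x
  define DV where "DV i x = v x * cnj (g i x) + g i x * cnj (v x)" for i x
  define R where "R i x = g i x * cnj (M x) + cnj (g i x) * M x - complex_of_real (m i x) * sg x
      + complex_of_real a * (complex_of_real (m i x) * sv x)" for i x
  define DR where "DR i x = g i x * cnj (Mi i x) + h i i x * cnj (M x) + (cnj (g i x) * Mi i x + cnj (h i i x) * M x)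
      - (complex_of_real (m i x) * DG i x + sg x) + complex_of_real a * (complex_of_real (m i x) * DV i x + sv x)" for i x
  have cm: "continuous_on S (m j)" for j S unfolding m_def[abs_def] by (intro continuous_intros)
  have cM: "continuous_on unit_cube M" unfolding M_def[abs_def] by (intro continuous_intros cm cg)
  have dm: "((\<lambda>t. complex_of_real (m j (x + t *\<^sub>R axis i 1))) has_vector_derivative
            complex_of_real (if j = i then 1 else 0)) (at 0)" for i j x
  proof -
    have eq: "(\<lambda>t. m j (x + t *\<^sub>R axis i 1)) = (\<lambda>t. (x$j - 1/2) + t * (if j = i then 1 else 0))"
      by (auto simp: m_def axis_def fun_eq_iff)
    have "((\<lambda>t. (x$j - 1/2) + t * (if j = i then 1 else 0)) has_field_derivative (if j = i then 1 else 0)) (at 0)"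
      by (auto intro!: derivative_eq_intros)
    then have "((\<lambda>t. m j (x + t *\<^sub>R axis i 1)) has_field_derivative (if j = i then 1 else 0)) (at 0)"
      unfolding eq .
    from has_vector_derivative_of_real[OF this] show ?thesis by simp
  qed
  have dM: "((\<lambda>t. M (x + t *\<^sub>R axis i 1)) has_vector_derivative Mi i x) (at 0)" if x: "x \<in> ?U" for i x
  proof -
    have dMj: "((\<lambda>t. complex_of_real (m j (x + t *\<^sub>R axis i 1)) * g j (x + t *\<^sub>R axis i 1)) has_vector_derivative
        (complex_of_real (m j x) * h j i x + complex_of_real (if j = i then 1 else 0) * g j x)) (at 0)" for j
      using has_vector_derivative_mult[OF dm[of j x i] dg[OF x, of j i]] by simp
    have "((\<lambda>t. M (x + t *\<^sub>R axis i 1)) has_vector_derivative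
        (\<Sum>j\<in>UNIV. complex_of_real (m j x) * h j i x + complex_of_real (if j = i then 1 else 0) * g j x)) (at 0)"
      unfolding M_def by (rule has_vector_derivative_sum) (rule dMj)
    moreover have "(\<Sum>j\<in>UNIV. complex_of_real (m j x) * h j i x + complex_of_real (if j = i then 1 else 0) * g j x) = Mi i x"
    proof -
      have "(\<Sum>j\<in>UNIV. complex_of_real (if j = i then 1 else 0) * g j x) = (\<Sum>j\<in>UNIV. if j = i then g j x else 0)"
        by (rule sum.cong) auto
      then show ?thesis by (simp add: Mi_def sum.distrib)
    qed
    ultimately show ?thesis by simp
  qed
  have dsg: "((\<lambda>t. sg (x + t *\<^sub>R axis i 1)) has_vector_derivative DG i x) (at 0)" if x: "x \<in> ?U" for i x
  proof -
    have "((\<lambda>t. g j (x + t *\<^sub>R axis i 1) * cnj (g j (x + t *\<^sub>R axis i 1))) has_vector_derivative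
        (g j x * cnj (h j i x) + h j i x * cnj (g j x))) (at 0)" for j
      using has_vector_derivative_mult[OF dg[OF x, of j i] has_vector_derivative_cnj[OF dg[OF x, of j i]]] by simp
    then show ?thesis unfolding sg_def DG_def by (rule has_vector_derivative_sum)
  qed
  have dsv: "((\<lambda>t. sv (x + t *\<^sub>R axis i 1)) has_vector_derivative DV i x) (at 0)" if x: "x \<in> ?U" for i x
    using has_vector_derivative_mult[OF dv[OF x, of i] has_vector_derivative_cnj[OF dv[OF x, of i]]]
    by (simp add: sv_def DV_def)
  have dR: "((\<lambda>t. R i (x + t *\<^sub>R axis i 1)) has_vector_derivative DR i x) (at 0)" if x: "x \<in> ?U" for i x
  proof -
    note d1 = has_vector_derivative_mult[OF dg[OF x, of i i] has_vector_derivative_cnj[OF dM[OF x, of i]]]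
    note d2 = has_vector_derivative_mult[OF has_vector_derivative_cnj[OF dg[OF x, of i i]] dM[OF x, of i]]
    note d3 = has_vector_derivative_mult[OF dm[of i x i] dsg[OF x, of i]]
    note d4 = has_vector_derivative_mult_right[OF has_vector_derivative_mult[OF dm[of i x i] dsv[OF x, of i]], of "complex_of_real a"]
    have "((\<lambda>t. R i (x + t *\<^sub>R axis i 1)) has_vector_derivative
       (g i x * cnj (Mi i x) + h i i x * cnj (M x) + (cnj (g i x) * Mi i x + cnj (h i i x) * M x)
        - (complex_of_real (m i x) * DG i x + 1 * sg x) + complex_of_real a * (complex_of_real (m i x) * DV i x + 1 * sv x))) (at 0)"
      using has_vector_derivative_add[OF has_vector_derivative_diff[OF has_vector_derivative_add[OF d1 d2] d3] d4]
      by (simp add: R_def)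
    then show ?thesis by (simp add: DR_def)
  qed
  define d where "d = real CARD('n)"
  define w where "w x = v x * cnj (M x)" for x
  define DD where "DD x = - (k2 * w x) - cnj (k2 * w x) + complex_of_real ((2 - d) * ng x + a * d * nv x)
      + complex_of_real a * (w x + cnj (w x))" for x
  have sg_eq: "sg x = complex_of_real (ng x)" for x
    by (simp add: sg_def ng_def mult_cnj_norm)
  have sv_eq: "sv x = complex_of_real (nv x)" for x
    by (simp add: sv_def nv_def mult_cnj_norm)
  have divR: "(\<Sum>i\<in>UNIV. DR i x) = DD x" if x: "x \<in> ?U" for x
  proof -
    have S1: "(\<Sum>i\<in>UNIV. h i i x * cnj (M x) + cnj (h i i x) * M x) = - (k2 * w x) - cnj (k2 * w x)"
    proof -
      have "(\<Sum>i\<in>UNIV. h i i x * cnj (M x) + cnj (h i i x) * M x)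
          = (\<Sum>i\<in>UNIV. h i i x) * cnj (M x) + cnj (\<Sum>i\<in>UNIV. h i i x) * M x"
        by (simp add: sum.distrib sum_distrib_right cnj_sum)
      also have "\<dots> = - (k2 * w x) - cnj (k2 * w x)"
        by (simp add: pde[OF x] w_def algebra_simps)
      finally show ?thesis .
    qed
    define X where "X = (\<Sum>i\<in>UNIV. \<Sum>j\<in>UNIV. complex_of_real (m j x) * (g i x * cnj (h j i x) + cnj (g i x) * h j i x))"
    have S2: "(\<Sum>i\<in>UNIV. g i x * cnj (Mi i x) + cnj (g i x) * Mi i x) = 2 * sg x + X"
    proof -
      have "g i x * cnj (Mi i x) + cnj (g i x) * Mi i x
          = 2 * (g i x * cnj (g i x)) + (\<Sum>j\<in>UNIV. complex_of_real (m j x) * (g i x * cnj (h j i x) + cnj (g i x) * h j i x))" for i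
        by (simp add: Mi_def cnj_sum sum_distrib_left sum.distrib algebra_simps)
      then show ?thesis by (simp add: sum.distrib sg_def X_def sum_distrib_left)
    qed
    have S3: "(\<Sum>i\<in>UNIV. complex_of_real (m i x) * DG i x + sg x) = X + of_real d * sg x"
    proof -
      have "(\<Sum>i\<in>UNIV. complex_of_real (m i x) * DG i x)
          = (\<Sum>i\<in>UNIV. \<Sum>j\<in>UNIV. complex_of_real (m i x) * (g j x * cnj (h j i x) + h j i x * cnj (g j x)))"
        by (simp add: DG_def sum_distrib_left)
      also have "\<dots> = (\<Sum>j\<in>UNIV. \<Sum>i\<in>UNIV. complex_of_real (m i x) * (g j x * cnj (h j i x) + h j i x * cnj (g j x)))"
        by (rule sum.swap)
      also have "\<dots> = X"
        unfolding X_def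
        by (intro sum.cong refl) (simp add: sym[OF x] algebra_simps)
      finally show ?thesis by (simp add: sum.distrib d_def)
    qed
    have S4: "(\<Sum>i\<in>UNIV. complex_of_real a * (complex_of_real (m i x) * DV i x + sv x))
        = complex_of_real a * (w x + cnj (w x)) + complex_of_real (a * d) * sv x"
    proof -
      have "(\<Sum>i\<in>UNIV. complex_of_real (m i x) * DV i x) = w x + cnj (w x)"
        by (simp add: DV_def w_def M_def cnj_sum sum_distrib_left sum.distrib algebra_simps)
      then show ?thesis by (simp add: sum.distrib sum_distrib_left[symmetric] d_def algebra_simps)
    qed
    have "(\<Sum>i\<in>UNIV. DR i x) = (\<Sum>i\<in>UNIV. h i i x * cnj (M x) + cnj (h i i x) * M x)
        + (\<Sum>i\<in>UNIV. g i x * cnj (Mi i x) + cnj (g i x) * Mi i x)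
        - (\<Sum>i\<in>UNIV. complex_of_real (m i x) * DG i x + sg x)
        + (\<Sum>i\<in>UNIV. complex_of_real a * (complex_of_real (m i x) * DV i x + sv x))"
      by (simp add: DR_def sum.distrib sum_subtractf algebra_simps)
    also have "\<dots> = DD x"
      unfolding S1 S2 S3 S4 unfolding DD_def sg_eq sv_eq by (simp add: algebra_simps)
    finally show ?thesis .
  qed
  have csg: "continuous_on S sg" if "S \<subseteq> unit_cube" for S
    unfolding sg_def[abs_def] by (intro continuous_intros continuous_on_subset[OF cg that])
  have csv: "continuous_on S sv" if "S \<subseteq> unit_cube" for S
    unfolding sv_def[abs_def] by (intro continuous_intros continuous_on_subset[OF cv that])
  have cMS: "continuous_on S M" if "S \<subseteq> unit_cube" for S
    using cM that by (rule continuous_on_subset)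
  have rel: "integral unit_cube DD = (\<Sum>i\<in>UNIV. integral unit_cube (\<lambda>x. R i (upd x i 1) - R i (upd x i 0)))"
  proof (rule div_limit[where F=R and Di=DR])
    show "continuous_on unit_cube (R i)" for i
      unfolding R_def[abs_def] by (intro continuous_intros cg cM cm csg csv) auto
    show "continuous_on ?U (DR i)" for i
      unfolding DR_def[abs_def] Mi_def[abs_def] DG_def[abs_def] DV_def[abs_def]
      by (intro continuous_intros cgU ch cvU cm csg csv cMS interior_subset)
    show "continuous_on unit_cube DD"
      unfolding DD_def[abs_def] w_def[abs_def] by (intro continuous_intros cv cM cng cnv)
    show "((\<lambda>t. R i (x + t *\<^sub>R axis i 1)) has_vector_derivative DR i x) (at 0)" if "x \<in> ?U" for i x
      by (rule dR[OF that])
    show "(\<Sum>i\<in>UNIV. DR i x) = DD x" if "x \<in> ?U" for x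
      by (rule divR[OF that])
  qed
  have dpos: "d \<ge> 0" by (simp add: d_def)
  have md: "\<bar>m j y\<bar> \<le> 1/2" if "y \<in> unit_cube" for j y
  proof -
    have "0 \<le> y$j" "y$j \<le> 1" using that by (auto simp: unit_cube_def)
    then show ?thesis unfolding m_def by (auto simp: abs_if)
  qed
  have normM: "cmod (M y) \<le> (\<Sum>j\<in>UNIV. cmod (g j y)) / 2" if y: "y \<in> unit_cube" for y
  proof -
    have "cmod (M y) \<le> (\<Sum>j\<in>UNIV. cmod (complex_of_real (m j y) * g j y))"
      unfolding M_def by (rule norm_sum)
    also have "\<dots> \<le> (\<Sum>j\<in>UNIV. cmod (g j y) / 2)"
    proof (rule sum_mono)
      fix j
      have "cmod (complex_of_real (m j y) * g j y) = \<bar>m j y\<bar> * cmod (g j y)" by (simp add: norm_mult)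
      also have "\<dots> \<le> (1/2) * cmod (g j y)" by (rule mult_right_mono[OF md[OF y]]) simp
      finally show "cmod (complex_of_real (m j y) * g j y) \<le> cmod (g j y) / 2" by simp
    qed
    also have "\<dots> = (\<Sum>j\<in>UNIV. cmod (g j y)) / 2" by (simp add: sum_divide_distrib)
    finally show ?thesis .
  qed
  have amgm: "cmod (v y) * cmod (g j y) \<le> (\<omega> * nv y + (cmod (g j y))\<^sup>2 / \<omega>) / 2" for y j
  proof -
    let ?p = "cmod (v y)" and ?q = "cmod (g j y)"
    have "0 \<le> (\<omega> * ?p - ?q)\<^sup>2" by simp
    then have "2 * ?p * ?q * \<omega> \<le> \<omega>\<^sup>2 * ?p\<^sup>2 + ?q\<^sup>2" by (simp add: power2_eq_square algebra_simps)
    then show ?thesis using \<omega> by (simp add: nv_def field_simps power2_eq_square)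
  qed
  have vM: "cmod (v y) * cmod (M y) \<le> (d * \<omega> * nv y + ng y / \<omega>) / 4" if y: "y \<in> unit_cube" for y
  proof -
    have "cmod (v y) * cmod (M y) \<le> cmod (v y) * ((\<Sum>j\<in>UNIV. cmod (g j y)) / 2)"
      by (rule mult_left_mono[OF normM[OF y]]) simp
    also have "\<dots> = (\<Sum>j\<in>UNIV. cmod (v y) * cmod (g j y)) / 2" by (simp add: sum_distrib_left)
    also have "\<dots> \<le> (\<Sum>j\<in>UNIV. (\<omega> * nv y + (cmod (g j y))\<^sup>2 / \<omega>) / 2) / 2"
      by (intro divide_right_mono sum_mono amgm) simp
    also have "\<dots> = (d * \<omega> * nv y + ng y / \<omega>) / 4"
      by (simp add: sum.distrib sum_divide_distrib[symmetric] ng_def d_def algebra_simps)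
    finally show ?thesis .
  qed
  have Imw: "\<bar>Im (w y)\<bar> \<le> (d * \<omega> * nv y + ng y / \<omega>) / 4" if y: "y \<in> unit_cube" for y
  proof -
    have "\<bar>Im (w y)\<bar> \<le> cmod (w y)" by (rule abs_Im_le_cmod)
    also have "\<dots> = cmod (v y) * cmod (M y)" by (simp add: w_def norm_mult)
    finally show ?thesis using vM[OF y] by linarith
  qed
  have ReDD: "Re (DD x) = 2 * b * Im (w x) + (2 - d) * ng x + a * d * nv x" for x
    by (simp add: DD_def a_def b_def algebra_simps)
  define c1 where "c1 = (2 - d) - \<bar>b\<bar> / (2 * \<omega>)"
  define c2 where "c2 = a * d - \<bar>b\<bar> * d * \<omega> / 2"
  have lowDD: "c1 * ng x + c2 * nv x \<le> Re (DD x)" if x: "x \<in> unit_cube" for x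
  proof -
    have "\<bar>2 * b * Im (w x)\<bar> \<le> 2 * \<bar>b\<bar> * ((d * \<omega> * nv x + ng x / \<omega>) / 4)"
    proof -
      have e: "\<bar>b\<bar> * \<bar>Im (w x)\<bar> \<le> \<bar>b\<bar> * ((d * \<omega> * nv x + ng x / \<omega>) / 4)"
        by (rule mult_left_mono[OF Imw[OF x]]) simp
      have "\<bar>2 * b * Im (w x)\<bar> = 2 * (\<bar>b\<bar> * \<bar>Im (w x)\<bar>)" by (simp add: abs_mult)
      then show ?thesis using e by linarith
    qed
    then have "- (2 * \<bar>b\<bar> * ((d * \<omega> * nv x + ng x / \<omega>) / 4)) \<le> 2 * b * Im (w x)" by linarith
    moreover have "c1 * ng x + c2 * nv x = (2 - d) * ng x + a * d * nv x - 2 * \<bar>b\<bar> * ((d * \<omega> * nv x + ng x / \<omega>) / 4)"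
      using \<omega> by (simp add: c1_def c2_def field_simps)
    ultimately show ?thesis unfolding ReDD by linarith
  qed
  have ReR: "Re (R i y) = 2 * Re (g i y * cnj (M y)) - m i y * ng y + a * m i y * nv y" for i y
  proof -
    have "Re (g i y * cnj (M y) + cnj (g i y) * M y) = 2 * Re (g i y * cnj (M y))"
      using cnj_add_mult_eq_Re[of "g i y" "M y"] by simp
    then show ?thesis by (simp add: R_def sg_eq sv_eq)
  qed
  define K where "K = (d * \<omega>\<^sup>2 + a) / 2"
  have bnd: "2 * \<omega> * \<bar>Im (w y)\<bar> - ng y / 2 + a * nv y / 2 \<le> K * nv y" if y: "y \<in> unit_cube" for y
  proof -
    have "2 * \<omega> * \<bar>Im (w y)\<bar> \<le> 2 * \<omega> * ((d * \<omega> * nv y + ng y / \<omega>) / 4)"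
      using Imw[OF y] \<omega> by (simp add: mult_left_mono)
    also have "\<dots> = (d * \<omega>\<^sup>2 * nv y + ng y) / 2" using \<omega> by (simp add: field_simps power2_eq_square)
    finally show ?thesis by (simp add: K_def field_simps)
  qed
  have upR: "Re (R i (upd x i 1) - R i (upd x i 0)) \<le> K * (nv (upd x i 1) + nv (upd x i 0))" if x: "x \<in> unit_cube" for i x
  proof -
    define y1 where "y1 = upd x i 1"
    define y0 where "y0 = upd x i 0"
    have y1: "y1 \<in> unit_cube" "y1 $ i = 1" and y0: "y0 \<in> unit_cube" "y0 $ i = 0"
      using x by (auto simp: y1_def y0_def intro: upd_in_cube)
    have R1: "Re (R i y1) = - 2 * \<omega> * Im (w y1) - ng y1 / 2 + a * nv y1 / 2"
      unfolding ReR by (simp add: bc1[OF y1] m_def y1 w_def algebra_simps)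
    have R0: "Re (R i y0) = 2 * \<omega> * Im (w y0) + ng y0 / 2 - a * nv y0 / 2"
      unfolding ReR by (simp add: bc0[OF y0] m_def y0 w_def algebra_simps)
    have "Re (R i y1 - R i y0) \<le> (2 * \<omega> * \<bar>Im (w y1)\<bar> - ng y1 / 2 + a * nv y1 / 2)
        + (2 * \<omega> * \<bar>Im (w y0)\<bar> - ng y0 / 2 + a * nv y0 / 2)"
      using R1 R0 \<omega> by (simp add: abs_if mult_less_0_iff)
    also have "\<dots> \<le> K * nv y1 + K * nv y0" by (intro add_mono bnd y1 y0)
    finally show ?thesis by (simp add: y1_def y0_def algebra_simps)
  qed
  have cR: "continuous_on unit_cube (R i)" for i
    unfolding R_def[abs_def] by (intro continuous_intros cg cM cm csg csv) auto
  have cDD: "continuous_on unit_cube DD"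
    unfolding DD_def[abs_def] w_def[abs_def] by (intro continuous_intros cv cM cng cnv)
  have cRd: "continuous_on unit_cube (\<lambda>x. R i (upd x i 1) - R i (upd x i 0))" for i
    by (intro continuous_intros cont_upd_cube cR) auto
  have low: "c1 * NG + c2 * NV \<le> Re (integral unit_cube DD)"
  proof -
    have i1: "(\<lambda>x. c1 * ng x + c2 * nv x) integrable_on unit_cube"
      by (rule integrable_cube) (intro continuous_intros cng cnv)
    have i2: "(\<lambda>x. Re (DD x)) integrable_on unit_cube"
      by (rule integrable_cube) (intro continuous_intros cDD)
    have "c1 * NG + c2 * NV = integral unit_cube (\<lambda>x. c1 * ng x + c2 * nv x)"
    proof -
      have ia: "(\<lambda>x. c1 * ng x) integrable_on unit_cube" by (rule integrable_cube) (intro continuous_intros cng)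
      have ib: "(\<lambda>x. c2 * nv x) integrable_on unit_cube" by (rule integrable_cube) (intro continuous_intros cnv)
      show ?thesis by (simp add: integral_add[OF ia ib] NG_def NV_def)
    qed
    also have "\<dots> \<le> integral unit_cube (\<lambda>x. Re (DD x))"
      by (rule integral_le[OF i1 i2 lowDD])
    also have "\<dots> = Re (integral unit_cube DD)" by (rule integral_Re_cube[OF cDD, symmetric])
    finally show ?thesis .
  qed
  have up: "Re (\<Sum>i\<in>UNIV. integral unit_cube (\<lambda>x. R i (upd x i 1) - R i (upd x i 0))) \<le> K * BV"
  proof -
    have "Re (\<Sum>i\<in>UNIV. integral unit_cube (\<lambda>x. R i (upd x i 1) - R i (upd x i 0)))
        = (\<Sum>i\<in>UNIV. integral unit_cube (\<lambda>x. Re (R i (upd x i 1) - R i (upd x i 0))))"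
      by (simp add: Re_sum integral_Re_cube[OF cRd])
    also have "\<dots> \<le> (\<Sum>i\<in>UNIV. integral unit_cube (\<lambda>x. K * (nv (upd x i 1) + nv (upd x i 0))))"
    proof (rule sum_mono)
      fix i
      show "integral unit_cube (\<lambda>x. Re (R i (upd x i 1) - R i (upd x i 0)))
          \<le> integral unit_cube (\<lambda>x. K * (nv (upd x i 1) + nv (upd x i 0)))"
        by (rule integral_le[OF integrable_cube integrable_cube upR])
           (intro continuous_intros cRd cnvb)+
    qed
    also have "\<dots> = K * BV" by (simp add: BV_def sum_distrib_left)
    finally show ?thesis .
  qed
  have ineq: "c1 * NG + c2 * NV \<le> K * BV" using low up rel by simp
  have NV0: "NV \<ge> 0" unfolding NV_def
    by (rule integral_nonneg[OF integrable_cube[OF cnv]]) (simp add: nv_def)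
  have BV0: "BV \<ge> 0" unfolding BV_def
    by (intro sum_nonneg integral_nonneg[OF integrable_cube[OF cnvb]]) (simp add: nv_def)
  have NVpos: "NV > 0"
  proof (rule ccontr)
    assume "\<not> NV > 0"
    then have "NV = 0" using NV0 by simp
    obtain x0 where x0: "x0 \<in> unit_cube" "v x0 \<noteq> 0" using nz by blast
    have "nv x0 = 0"
    proof (rule has_integral_0_cbox_imp_0[of 0 "\<chi> j. 1" nv])
      show "continuous_on (cbox 0 (\<chi> j. 1)) nv" using cnv by (simp add: unit_cube_cbox)
      show "0 \<le> nv x" for x by (simp add: nv_def)
      show "(nv has_integral 0) (cbox 0 (\<chi> j. 1))"
        using integrable_integral[OF integrable_cube[OF cnv]] \<open>NV = 0\<close> by (simp add: NV_def unit_cube_cbox)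
      show "box 0 (\<chi> j. 1) \<noteq> ({} :: (real^'n) set)" by (simp add: interval_ne_empty_cart(2))
      show "x0 \<in> cbox 0 (\<chi> j. 1)" using x0 by (simp add: unit_cube_cbox)
    qed
    then show False using x0 by (simp add: nv_def)
  qed
  have bneg: "b \<le> 0"
  proof -
    have "- b * NV \<ge> 0" using GIm BV0 \<omega> by simp
    then show ?thesis using NVpos by (simp add: mult_le_0_iff)
  qed
  have BVeq: "BV = \<bar>b\<bar> * NV / \<omega>" using GIm bneg \<omega> by (simp add: field_simps)
  have "NV * (c1 * a + c2) \<le> NV * (K * \<bar>b\<bar> / \<omega>)"
    using ineq unfolding GRe BVeq by (simp add: algebra_simps)
  then have e1: "c1 * a + c2 \<le> K * \<bar>b\<bar> / \<omega>" by (rule mult_left_le_imp_le[OF _ NVpos])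
  have e2: "c1 * a + c2 = 2 * a - \<bar>b\<bar> * (a + d * \<omega>\<^sup>2) / (2 * \<omega>)"
    using \<omega> by (simp add: c1_def c2_def field_simps power2_eq_square)
  have e3: "K * \<bar>b\<bar> / \<omega> = \<bar>b\<bar> * (a + d * \<omega>\<^sup>2) / (2 * \<omega>)"
    using \<omega> by (simp add: K_def field_simps)
  have "2 * a \<le> \<bar>b\<bar> * (a + d * \<omega>\<^sup>2) / \<omega>" using e1 unfolding e2 e3 by (simp add: field_simps)
  then have "2 * a * \<omega> \<le> \<bar>b\<bar> * (a + d * \<omega>\<^sup>2)" using \<omega> by (simp add: field_simps)
  then show ?thesis by (simp add: a_eq b_eq d_def algebra_simps)
qed

theorem theorem5p1:
  fixes \<rho> :: real
  assumes "CARD('n::finite) \<ge> 2"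
    and "0 < \<rho>" and "\<rho> < 1"
  shows "\<exists>s>0. \<exists>\<omega>\<^sub>0>0. \<forall>\<omega>\<ge>\<omega>\<^sub>0. \<forall>(lam::complex) (v :: real ^ 'n \<Rightarrow> complex).
           impedance_eigenpair \<omega> lam v \<and> cmod lam \<le> \<rho> * \<omega>\<^sup>2
           \<longrightarrow> \<bar>Im lam\<bar> \<ge> s * \<omega>"
proof -
  define d where "d = real CARD('n)"
  have d0: "d \<ge> 0" by (simp add: d_def)
  define s where "s = 2 * (1 - \<rho>) / (d + 2)"
  have s: "s > 0" using assms d0 by (simp add: s_def)
  have main: "\<bar>Im lam\<bar> \<ge> s * \<omega>"
    if \<omega>: "\<omega> \<ge> 1" and eig: "impedance_eigenpair \<omega> lam (v :: real ^ 'n \<Rightarrow> complex)"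
      and lam: "cmod lam \<le> \<rho> * \<omega>\<^sup>2" for \<omega> lam v
  proof -
    have \<omega>0: "\<omega> > 0" using \<omega> by simp
    define a where "a = \<omega>\<^sup>2 + Re lam"
    have Rl: "\<bar>Re lam\<bar> \<le> cmod lam" by (rule abs_Re_le_cmod)
    have w2: "\<omega>\<^sup>2 > 0" using \<omega>0 by simp
    have h1: "(1 - \<rho>) * \<omega>\<^sup>2 \<le> a" using Rl lam by (simp add: a_def algebra_simps)
    have h2: "a \<le> 2 * \<omega>\<^sup>2"
    proof -
      have "\<rho> * \<omega>\<^sup>2 \<le> 1 * \<omega>\<^sup>2" using assms w2 by (intro mult_right_mono) auto
      then show ?thesis using Rl lam by (simp add: a_def)
    qed
    have apos: "\<omega>\<^sup>2 + Re lam > 0"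
    proof -
      have "0 < (1 - \<rho>) * \<omega>\<^sup>2" using assms w2 by simp
      then show ?thesis using h1 by (simp add: a_def)
    qed
    have me: "2 * a * \<omega> \<le> \<bar>Im lam\<bar> * (d * \<omega>\<^sup>2 + a)"
      using main_est[OF eig \<omega>0 apos] by (simp add: a_def d_def)
    also have "\<dots> \<le> \<bar>Im lam\<bar> * ((d + 2) * \<omega>\<^sup>2)"
      using h2 by (intro mult_left_mono) (auto simp: algebra_simps)
    finally have h3: "2 * a * \<omega> \<le> \<bar>Im lam\<bar> * ((d + 2) * \<omega>\<^sup>2)" .
    have "2 * ((1 - \<rho>) * \<omega>\<^sup>2) * \<omega> \<le> 2 * a * \<omega>"
      using h1 \<omega>0 by (intro mult_right_mono) auto
    with h3 have "(2 * (1 - \<rho>) * \<omega>) * \<omega>\<^sup>2 \<le> (\<bar>Im lam\<bar> * (d + 2)) * \<omega>\<^sup>2"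
      by (simp add: algebra_simps)
    then have "2 * (1 - \<rho>) * \<omega> \<le> \<bar>Im lam\<bar> * (d + 2)"
      using w2 by (simp add: mult_le_cancel_right)
    then show ?thesis using d0 by (simp add: s_def field_simps)
  qed
  show ?thesis
    by (rule exI[of _ s], intro conjI s exI[of _ 1]) (use main in auto)
qed

end
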